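(* Let $S_\infty$ be the group of all permutations of $\mathbb{Q}$ with the pointwise convergence topology and $Aut(\mathbb{Q},<)\subset S_\infty$ the subgroup of bijections preserving the usual order of $\mathbb{Q}$. Then $Aut(\mathbb{Q},<)$ is maximally extremely amenable in $S_\infty$: it is extremely amenable, and there is no extremely amenable subgroup $H'$ with $Aut(\mathbb{Q},<)\subsetneq H'\subset S_\infty$.
   Context: A topological group $E$ is extremely amenable if every compact Hausdorff space with a continuous $E$-action has a point fixed by all of $E$. Subgroups carry the subspace topology. *)

theory Defs
  imports "HOL-Analysis.Analysis"
begin

definition Sinf :: "(rat \<Rightarrow> rat) set" where
  "Sinf = {f. bij f}"

definition pointwise_top :: "(rat \<Rightarrow> rat) topology" where
  "pointwise_top = product_topology (\<lambda>_. discrete_topology (UNIV :: rat set)) UNIV"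

definition Sinf_top :: "(rat \<Rightarrow> rat) topology" where
  "Sinf_top = subtopology pointwise_top Sinf"

definition subgroup_Sinf :: "(rat \<Rightarrow> rat) set \<Rightarrow> bool" where
  "subgroup_Sinf H \<longleftrightarrow> H \<subseteq> Sinf \<and> id \<in> H \<and>
     (\<forall>f\<in>H. \<forall>g\<in>H. f \<circ> g \<in> H) \<and> (\<forall>f\<in>H. inv f \<in> H)"

definition AutQ :: "(rat \<Rightarrow> rat) set" where
  "AutQ = {f. bij f \<and> (\<forall>x y. x < y \<longrightarrow> f x < f y)}"

definition continuous_action ::
  "(rat \<Rightarrow> rat) set \<Rightarrow> 'b topology \<Rightarrow> ((rat \<Rightarrow> rat) \<Rightarrow> 'b \<Rightarrow> 'b) \<Rightarrow> bool" where
  "continuous_action H X a \<longleftrightarrow>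
     (\<forall>g\<in>H. \<forall>x\<in>topspace X. a g x \<in> topspace X) \<and>
     (\<forall>x\<in>topspace X. a id x = x) \<and>
     (\<forall>g\<in>H. \<forall>h\<in>H. \<forall>x\<in>topspace X. a (g \<circ> h) x = a g (a h x)) \<and>
     continuous_map (prod_topology (subtopology Sinf_top H) X) X (\<lambda>(g, x). a g x)"

text \<open>Extreme amenability of a subgroup H of S_infinity, tested against all nonempty compact
  Hausdorff spaces whose points live in the type 'b.\<close>

definition extremely_amenable_on :: "'b itself \<Rightarrow> (rat \<Rightarrow> rat) set \<Rightarrow> bool" where
  "extremely_amenable_on (_ :: 'b itself) H \<longleftrightarrow>
     (\<forall>(X :: 'b topology) a. compact_space X \<and> Hausdorff_space X \<and> topspace X \<noteq> {} \<and>
        continuous_action H X a \<longrightarrow> (\<exists>x\<in>topspace X. \<forall>g\<in>H. a g x = x))"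

text \<open>The universe type used for the maximality part. Its cardinality 2^(2^c) bounds that of
  the greatest ambit (Samuel compactification) of any subgroup of S_infinity, so testing
  against spaces in this type is equivalent to testing against all compact Hausdorff spaces.\<close>

type_synonym universe = "(rat \<Rightarrow> rat) set set"

end

theory Submission
  imports Defs "HOL-Library.Ramsey"
begin


lemma AutQ_mem: "f \<in> AutQ \<longleftrightarrow> bij f \<and> (\<forall>x y. x < y \<longrightarrow> f x < f y)"
  by (simp add: AutQ_def)

lemma AutQ_less_iff: "f \<in> AutQ \<Longrightarrow> f x < f y \<longleftrightarrow> x < y"
  unfolding AutQ_def by (metis (mono_tags, lifting) mem_Collect_eq not_less_iff_gr_or_eq)

lemma AutQ_le_iff: "f \<in> AutQ \<Longrightarrow> f x \<le> f y \<longleftrightarrow> x \<le> y"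
  by (meson AutQ_less_iff not_le)

lemma AutQ_bij: "f \<in> AutQ \<Longrightarrow> bij f" by (simp add: AutQ_def)

lemma AutQ_id: "id \<in> AutQ" by (simp add: AutQ_def)

lemma AutQ_comp: "f \<in> AutQ \<Longrightarrow> g \<in> AutQ \<Longrightarrow> f \<circ> g \<in> AutQ"
  unfolding AutQ_def by (auto intro: bij_comp)

lemma AutQ_inv: "f \<in> AutQ \<Longrightarrow> inv f \<in> AutQ"
proof -
  assume f: "f \<in> AutQ"
  then have b: "bij f" by (simp add: AutQ_def)
  have "inv f x < inv f y" if "x < y" for x y
    using AutQ_less_iff[OF f, of "inv f x" "inv f y"] that surj_f_inv_f[OF bij_is_surj[OF b]]
    by simp
  then show ?thesis using b by (simp add: AutQ_def bij_imp_bij_inv)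
qed

lemma AutQ_subgroup: "subgroup_Sinf AutQ"
  unfolding subgroup_Sinf_def Sinf_def
  using AutQ_id AutQ_comp AutQ_inv by (auto simp: AutQ_def)

lemma W_lemma:
  fixes t d e :: rat
  assumes "t < d" "t < e"
  shows "\<exists>w\<in>AutQ. (\<forall>y\<le>t. w y = y) \<and> w d = e"
proof -
  define w where "w y = (if y \<le> t then y else if y \<le> d then t + (y - t) * ((e-t)/(d-t)) else y - d + e)" for y
  have pos: "(e-t)/(d-t) > 0" using assms by simp
  define c where "c = (e-t)/(d-t)"
  have pos': "c > 0" using pos by (simp add: c_def)
  have cd: "(d - t) * c = e - t" using assms by (simp add: c_def)
  have w_alt: "w y = (if y \<le> t then y else if y \<le> d then t + (y - t) * c else y - d + e)" for y
    by (simp add: w_def c_def)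
  have mono: "w x < w y" if "x < y" for x y
  proof -
    have A: "t + (y - t) * c \<le> e" if "y \<le> d" for y
    proof -
      have "(y - t) * c \<le> (d - t) * c"
        using pos' that by (intro mult_right_mono) auto
      then show ?thesis using cd by simp
    qed
    have B: "t < t + (y - t) * c" if "t < y" for y
    proof -
      have "0 < (y - t) * c" using pos' that by (intro mult_pos_pos) auto
      then show ?thesis by linarith
    qed
    have C: "(x - t) * c < (y - t) * c" using \<open>x < y\<close> pos' by (intro mult_strict_right_mono) auto
    show ?thesis
      unfolding w_alt using that A[of x] B[of y] B[of x] C assms
      by auto
  qed
  have surj: "\<exists>y. w y = z" for z
  proof (cases "z \<le> t")
    case True then show ?thesis by (auto simp: w_def intro!: exI[of _ z])
  next
    case False
    show ?thesis
    proof (cases "z \<le> e")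
      case True
      define y where "y = t + (z - t) * ((d-t)/(e-t))"
      have y1: "t < y" using False assms by (simp add: y_def)
      have "(z - t) * ((d-t)/(e-t)) \<le> (e - t) * ((d-t)/(e-t))"
        using True assms by (intro mult_right_mono) auto
      then have y2: "y \<le> d" using assms by (simp add: y_def)
      have "w y = z" using y1 y2 assms by (simp add: w_def y_def)
      then show ?thesis by blast
    next
      case F2: False
      have "w (z - e + d) = z" using F2 False assms by (simp add: w_def)
      then show ?thesis by blast
    qed
  qed
  have "inj w" using mono by (metis injI linorder_neq_iff order_less_irrefl)
  moreover have "surj w" using surj by (metis surjI)
  ultimately have "w \<in> AutQ" using mono by (simp add: AutQ_def bij_def)
  moreover have "\<forall>y\<le>t. w y = y" by (simp add: w_def)
  moreover have "w d = e" using assms by (simp add: w_def)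
  ultimately show ?thesis by blast
qed



lemma hom_lemma:
  fixes B C :: "rat set"
  shows "finite B \<Longrightarrow> finite C \<Longrightarrow> card B = card C \<Longrightarrow> \<exists>u\<in>AutQ. u ` B = C"
proof (induction "card B" arbitrary: B C)
  case 0
  then show ?case using AutQ_id by (auto intro!: bexI[of _ id])
next
  case (Suc n)
  have Bne: "B \<noteq> {}" and Cne: "C \<noteq> {}" using Suc by auto
  define b where "b = Max B"
  define c where "c = Max C"
  define B' where "B' = B - {b}"
  define C' where "C' = C - {c}"
  have bB: "b \<in> B" using Bne Suc by (simp add: b_def)
  have cC: "c \<in> C" using Cne Suc by (simp add: c_def)
  have "card B' = n" "card C' = n" using Suc bB cC by (auto simp: B'_def C'_def)
  then obtain u where u: "u \<in> AutQ" "u ` B' = C'"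
    using Suc.hyps(1)[of B' C'] Suc.prems by (auto simp: B'_def C'_def)
  define d where "d = u b"
  have "\<exists>t. t < d \<and> t < c \<and> (\<forall>y\<in>C'. y \<le> t)"
  proof (cases "C' = {}")
    case True then show ?thesis by (intro exI[of _ "min d c - 1"]) auto
  next
    case False
    have fC': "finite C'" using Suc by (simp add: C'_def)
    have m: "Max C' \<in> C'" using False fC' by simp
    then obtain b' where b': "b' \<in> B'" "u b' = Max C'" using u by auto
    have "b' < b" using b' Suc(3) by (auto simp: B'_def b_def less_le)
    then have 1: "Max C' < d" using b' AutQ_less_iff[OF u(1), of b' b] by (simp add: d_def)
    have 2: "Max C' < c" using m Suc(4) by (auto simp: C'_def c_def less_le)
    show ?thesis using 1 2 fC' by (intro exI[of _ "Max C'"]) auto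
  qed
  then obtain t where t: "t < d" "t < c" "\<forall>y\<in>C'. y \<le> t" by blast
  obtain w where w: "w \<in> AutQ" "\<forall>y\<le>t. w y = y" "w d = c"
    using W_lemma[OF t(1) t(2)] by blast
  have fixC: "\<And>y. y \<in> C' \<Longrightarrow> w y = y" using w(2) t(3) by blast
  have "w ` C' = C'" by (simp add: fixC)
  moreover have "B = insert b B'" "C = insert c C'" using bB cC by (auto simp: B'_def C'_def)
  ultimately have "(w \<circ> u) ` B = C"
    using u(2) w(3) by (simp add: image_comp[symmetric] d_def image_image) (metis image_image)
  then show ?case using AutQ_comp[OF w(1) u(1)] by blast
qed

lemma AutQ_fix_finite:
  assumes k: "k \<in> AutQ" and F: "finite F" and kF: "k ` F = F"
  shows "\<forall>q\<in>F. k q = q"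
proof (rule ccontr)
  assume "\<not> ?thesis"
  then have ne: "{q\<in>F. k q \<noteq> q} \<noteq> {}" by auto
  define a where "a = Min {q\<in>F. k q \<noteq> q}"
  have fin: "finite {q\<in>F. k q \<noteq> q}" using F by simp
  have aF: "a \<in> F" and ka: "k a \<noteq> a" using Min_in[OF fin ne] by (auto simp: a_def)
  have minim: "k q = q" if "q \<in> F" "q < a" for q
    using Min_le[OF fin, of q] that by (force simp: a_def)
  show False
  proof (cases "k a < a")
    case True
    have "k a \<in> F" using aF kF by auto
    then have "k (k a) = k a" using minim True by blast
    then have "k a = a" using AutQ_bij[OF k] by (metis bij_pointE)
    then show False using ka by simp
  next
    case False
    then have gt: "a < k a" using ka by simp
    obtain b where b: "b \<in> F" "k b = a" using aF kF by (metis imageE)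
    show False
    proof (cases "b < a")
      case True then show False using minim b by auto
    next
      case False
      then have "a \<le> b" by simp
      then have "k a \<le> k b" using AutQ_le_iff[OF k] by simp
      then show False using gt b by simp
    qed
  qed
qed

lemma embed_infinite:
  assumes "finite B" "infinite (Y::rat set)"
  shows "\<exists>u\<in>AutQ. u ` B \<subseteq> Y"
proof -
  obtain C where "C \<subseteq> Y" "finite C" "card C = card B"
    using infinite_arbitrarily_large[OF assms(2)] by blast
  then obtain u where "u \<in> AutQ" "u ` B = C" using hom_lemma[of B C] assms by metis
  then show ?thesis using \<open>C \<subseteq> Y\<close> by blast
qed



lemma topspace_pointwise: "topspace pointwise_top = UNIV"
  by (simp add: pointwise_top_def)

lemma AutQ_Sinf: "AutQ \<subseteq> Sinf" by (auto simp: AutQ_def Sinf_def)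

lemma subtop_eq: "H \<subseteq> Sinf \<Longrightarrow> subtopology Sinf_top H = subtopology pointwise_top H"
  by (simp add: Sinf_top_def subtopology_subtopology Int_absorb1)

lemma topspace_G: "H \<subseteq> Sinf \<Longrightarrow> topspace (subtopology Sinf_top H) = H"
  by (simp add: subtop_eq topspace_pointwise)

lemma topspace_Sinf_top: "topspace Sinf_top = Sinf"
  by (simp add: Sinf_top_def topspace_pointwise)

lemma AutQ_in_Sinf: "g \<in> AutQ \<Longrightarrow> g \<in> Sinf" using AutQ_Sinf by auto

lemma nbhd_id:
  assumes H: "H \<subseteq> Sinf" and U: "openin (subtopology Sinf_top H) U" and idU: "id \<in> U"
  shows "\<exists>F. finite F \<and> {k\<in>H. \<forall>q\<in>F. k q = q} \<subseteq> U"
proof -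
  obtain T where T: "openin pointwise_top T" "U = T \<inter> H"
    using U by (auto simp: subtop_eq[OF H] openin_subtopology)
  have "id \<in> T" using idU T by auto
  then obtain V where V: "finite {i \<in> UNIV. V i \<noteq> topspace (discrete_topology (UNIV::rat set))}"
     "id \<in> Pi\<^sub>E UNIV V" "Pi\<^sub>E UNIV V \<subseteq> T"
    using T(1) unfolding pointwise_top_def openin_product_topology_alt by blast
  define F where "F = {i. V i \<noteq> UNIV}"
  have "finite F" using V(1) by (simp add: F_def)
  moreover have "{k\<in>H. \<forall>q\<in>F. k q = q} \<subseteq> U"
  proof
    fix k assume k: "k \<in> {k\<in>H. \<forall>q\<in>F. k q = q}"
    have "k \<in> Pi\<^sub>E UNIV V"
    proof (simp add: PiE_def Pi_def, intro allI)
      fix i show "k i \<in> V i"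
      proof (cases "i \<in> F")
        case True then have "k i = i" using k by auto
        then show ?thesis using V(2) by (auto simp: PiE_def Pi_def)
      next
        case False then show ?thesis by (simp add: F_def)
      qed
    qed
    then show "k \<in> U" using V(3) T(2) k by auto
  qed
  ultimately show ?thesis by blast
qed

lemma open_basic:
  assumes H: "H \<subseteq> Sinf"
  shows "openin (subtopology Sinf_top H) {g\<in>H. g r = p}"
proof -
  have "openin pointwise_top {g \<in> topspace pointwise_top. g r \<in> {p}}"
    unfolding pointwise_top_def
    by (rule openin_continuous_map_preimage[OF continuous_map_product_projection]) auto
  then have "openin pointwise_top {g. g r = p}" by (simp add: topspace_pointwise)
  then show ?thesis
    by (auto simp: subtop_eq[OF H] openin_subtopology intro!: exI[of _ "{g. g r = p}"])
qed

context
  fixes X :: "'b topology" and a :: "(rat \<Rightarrow> rat) \<Rightarrow> 'b \<Rightarrow> 'b"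
  assumes act: "continuous_action AutQ X a"
begin

abbreviation "GG \<equiv> subtopology Sinf_top AutQ"

lemma act_cont: "continuous_map (prod_topology GG X) X (\<lambda>(g, x). a g x)"
  using act by (simp add: continuous_action_def)

lemma act_id: "x \<in> topspace X \<Longrightarrow> a id x = x"
  using act by (simp add: continuous_action_def)

lemma act_comp: "g \<in> AutQ \<Longrightarrow> h \<in> AutQ \<Longrightarrow> x \<in> topspace X \<Longrightarrow> a (g \<circ> h) x = a g (a h x)"
  using act by (simp add: continuous_action_def)

lemma act_in: "g \<in> AutQ \<Longrightarrow> x \<in> topspace X \<Longrightarrow> a g x \<in> topspace X"
  using act by (simp add: continuous_action_def)

lemma act_g_cont: "g \<in> AutQ \<Longrightarrow> continuous_map X X (a g)"
proof -
  assume g: "g \<in> AutQ"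
  have "continuous_map X (prod_topology GG X) (\<lambda>x. (g, x))"
    using g by (intro continuous_map_pairedI) (auto simp: topspace_Sinf_top AutQ_in_Sinf)
  from continuous_map_compose[OF this act_cont] show ?thesis by (simp add: o_def)
qed

lemma tube:
  assumes cpt: "compact_space X" and cm: "continuous_map X euclideanreal f" and e: "e > 0"
  shows "\<exists>F. finite F \<and> (\<forall>k\<in>AutQ. (\<forall>q\<in>F. k q = q) \<longrightarrow> (\<forall>y\<in>topspace X. \<bar>f (a k y) - f y\<bar> < e))"
proof -
  define P where "P = prod_topology GG X"
  define \<Phi> where "\<Phi> = (\<lambda>z. f ((\<lambda>(g, x). a g x) z))"
  have cP: "continuous_map P euclideanreal \<Phi>"
    unfolding \<Phi>_def P_def using continuous_map_compose[OF act_cont cm] by (simp add: o_def)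
  have loc: "\<exists>V Fy. openin X V \<and> y \<in> V \<and> finite Fy \<and>
      (\<forall>k\<in>AutQ. (\<forall>q\<in>Fy. k q = q) \<longrightarrow> (\<forall>y'\<in>V. \<bar>f (a k y') - f y\<bar> < e/2))"
    if y: "y \<in> topspace X" for y
  proof -
    define W where "W = {z \<in> topspace P. \<Phi> z \<in> ball (f y) (e/2)}"
    have oW: "openin P W" unfolding W_def
      by (rule openin_continuous_map_preimage[OF cP]) simp
    have "(id, y) \<in> W" using y e AutQ_id act_id[OF y]
      by (simp add: W_def P_def \<Phi>_def topspace_Sinf_top AutQ_in_Sinf)
    moreover have "\<forall>x y. (x,y) \<in> W \<longrightarrow> (\<exists>U V. openin GG U \<and> openin X V \<and> x \<in> U \<and> y \<in> V \<and> U \<times> V \<subseteq> W)"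
      using oW unfolding P_def openin_prod_topology_alt .
    ultimately obtain U V where UV: "openin GG U" "openin X V" "id \<in> U" "y \<in> V" "U \<times> V \<subseteq> W"
      by meson
    obtain Fy where Fy: "finite Fy" "{k\<in>AutQ. \<forall>q\<in>Fy. k q = q} \<subseteq> U"
      using nbhd_id[OF AutQ_Sinf UV(1) UV(3)] by blast
    have "\<bar>f (a k y') - f y\<bar> < e/2" if "k \<in> AutQ" "\<forall>q\<in>Fy. k q = q" "y' \<in> V" for k y'
    proof -
      have "(k, y') \<in> W" using UV(5) Fy(2) that by blast
      then show ?thesis by (simp add: W_def \<Phi>_def dist_real_def abs_minus_commute)
    qed
    then show ?thesis using UV Fy by (intro exI[of _ V] exI[of _ Fy]) simp
  qed
  define Q where "Q = (\<lambda>y V Fy. openin X V \<and> y \<in> V \<and> finite Fy \<and>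
      (\<forall>k\<in>AutQ. (\<forall>q\<in>Fy. k q = q) \<longrightarrow> (\<forall>y'\<in>V. \<bar>f (a k y') - f y\<bar> < e/2)))"
  have "\<forall>y\<in>topspace X. \<exists>p. Q y (fst p) (snd p)"
    using loc unfolding Q_def by fastforce
  then obtain hh where hh: "\<forall>y\<in>topspace X. Q y (fst (hh y)) (snd (hh y))"
    by (rule bchoice[elim_format]) blast
  define V where "V y = fst (hh y)" for y
  define Fy where "Fy y = snd (hh y)" for y
  have VF: "openin X (V y) \<and> y \<in> V y \<and> finite (Fy y) \<and>
      (\<forall>k\<in>AutQ. (\<forall>q\<in>Fy y. k q = q) \<longrightarrow> (\<forall>y'\<in>V y. \<bar>f (a k y') - f y\<bar> < e/2))"
    if "y \<in> topspace X" for y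
    using hh that unfolding V_def Fy_def Q_def by blast
  have c1: "\<forall>U\<in>V ` topspace X. openin X U" using VF by blast
  have c2: "topspace X \<subseteq> \<Union>(V ` topspace X)" using VF by blast
  obtain \<F> where \<F>: "finite \<F>" "\<F> \<subseteq> V ` topspace X" "topspace X \<subseteq> \<Union>\<F>"
    using cpt c1 c2 unfolding compact_space_alt by meson
  obtain T where T: "T \<subseteq> topspace X" "finite T" "\<F> = V ` T"
    using finite_subset_image[OF \<F>(1) \<F>(2)] by blast
  define F where "F = \<Union>(Fy ` T)"
  have "finite F" using T VF by (auto simp: F_def)
  moreover have "\<bar>f (a k y') - f y'\<bar> < e"
    if k: "k \<in> AutQ" "\<forall>q\<in>F. k q = q" and y': "y' \<in> topspace X" for k y'
  proof -
    obtain y where y: "y \<in> T" "y' \<in> V y" using \<F>(3) T(3) y' by auto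
    have yX: "y \<in> topspace X" using y T by auto
    have 1: "\<bar>f (a k y') - f y\<bar> < e/2" using VF[OF yX] k y by (auto simp: F_def)
    have 2: "\<bar>f (a id y') - f y\<bar> < e/2" using VF[OF yX] AutQ_id y by auto
    then have "\<bar>f y' - f y\<bar> < e/2" using act_id[OF y'] by simp
    with 1 show ?thesis by linarith
  qed
  ultimately show ?thesis by blast
qed

end


lemma ramsey_multi:
  fixes col :: "nat \<Rightarrow> 'a set \<Rightarrow> nat"
  assumes "infinite Z" "\<forall>j<n. \<forall>S. col j S < s"
  shows "\<exists>Y\<subseteq>Z. infinite Y \<and> (\<forall>j<n. \<forall>S1 S2. S1 \<subseteq> Y \<and> S2 \<subseteq> Y \<and> finite S1 \<and> finite S2
            \<and> card S1 = r \<and> card S2 = r \<longrightarrow> col j S1 = col j S2)"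
  using assms(2)
proof (induction n)
  case 0 then show ?case using assms(1) by blast
next
  case (Suc n)
  then obtain Y where Y: "Y \<subseteq> Z" "infinite Y" "\<forall>j<n. \<forall>S1 S2. S1 \<subseteq> Y \<and> S2 \<subseteq> Y \<and> finite S1 \<and> finite S2
            \<and> card S1 = r \<and> card S2 = r \<longrightarrow> col j S1 = col j S2" by auto
  have "\<forall>X. X \<subseteq> Y \<and> finite X \<and> card X = r \<longrightarrow> col n X < s" using Suc.prems by auto
  from Ramsey[OF Y(2) this] obtain Y' t where Y': "Y' \<subseteq> Y" "infinite Y'" "t < s"
     "\<forall>X. X \<subseteq> Y' \<and> finite X \<and> card X = r \<longrightarrow> col n X = t" by blast
  show ?case
  proof (intro exI[of _ Y'] conjI allI impI)
    show "Y' \<subseteq> Z" using Y Y' by auto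
    show "infinite Y'" by fact
    fix j S1 S2 assume "j < Suc n" and S: "S1 \<subseteq> Y' \<and> S2 \<subseteq> Y' \<and> finite S1 \<and> finite S2 \<and> card S1 = r \<and> card S2 = r"
    then show "col j S1 = col j S2"
    proof (cases "j = n")
      case True then show ?thesis using Y'(4) S by auto
    next
      case False then have "j < n" using \<open>j < Suc n\<close> by simp
      moreover have "S1 \<subseteq> Y" "S2 \<subseteq> Y" using Y'(1) S by auto
      ultimately show ?thesis using Y(3) S by blast
    qed
  qed
qed

context
  fixes X :: "'b topology" and a :: "(rat \<Rightarrow> rat) \<Rightarrow> 'b \<Rightarrow> 'b"
  assumes act: "continuous_action AutQ X a"
begin

lemma approx:
  fixes n :: nat
  assumes cpt: "compact_space X" and ne: "topspace X \<noteq> {}"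
   and G: "\<forall>j<n. G j \<in> AutQ \<and> continuous_map X euclideanreal (Fn j) \<and> E j > 0"
  shows "\<exists>x\<in>topspace X. \<forall>j<n. \<bar>Fn j (a (G j) x) - Fn j x\<bar> \<le> E j"
proof -
  define \<epsilon> where "\<epsilon> = Min (insert 1 (E ` {..<n})) / 3"
  have epos: "\<epsilon> > 0" unfolding \<epsilon>_def using G by (simp add: Min_gr_iff)
  have ele: "3 * \<epsilon> \<le> E j" if "j < n" for j
    using that by (auto simp: \<epsilon>_def intro!: Min_le)
  have "\<forall>j. \<exists>F. j < n \<longrightarrow> finite F \<and> (\<forall>k\<in>AutQ. (\<forall>q\<in>F. k q = q) \<longrightarrow>
            (\<forall>y\<in>topspace X. \<bar>Fn j (a k y) - Fn j y\<bar> < \<epsilon>))"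
    using tube[OF act cpt _ epos] G by blast
  then obtain FF where FF: "\<And>j. j < n \<Longrightarrow> finite (FF j) \<and> (\<forall>k\<in>AutQ. (\<forall>q\<in>FF j. k q = q) \<longrightarrow>
            (\<forall>y\<in>topspace X. \<bar>Fn j (a k y) - Fn j y\<bar> < \<epsilon>))"
    by metis
  define F where "F = \<Union>(FF ` {..<n})"
  have finF: "finite F" using FF by (auto simp: F_def)
  have unif: "\<bar>Fn j (a k y) - Fn j y\<bar> < \<epsilon>"
    if "j < n" "k \<in> AutQ" "\<forall>q\<in>F. k q = q" "y \<in> topspace X" for j k y
    using FF[OF that(1)] that by (auto simp: F_def)
  obtain x0 where x0: "x0 \<in> topspace X" using ne by blast
  define \<psi> where "\<psi> j h = Fn j (a h x0)" for j h
  have "\<forall>j. \<exists>m. j < n \<longrightarrow> (\<forall>y\<in>topspace X. \<bar>Fn j y\<bar> \<le> m)"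
  proof (intro allI impI)
    fix j
    show "\<exists>m. j < n \<longrightarrow> (\<forall>y\<in>topspace X. \<bar>Fn j y\<bar> \<le> m)"
    proof (cases "j < n")
      case True
      have "compactin euclideanreal (Fn j ` topspace X)"
        using image_compactin[of X "topspace X" euclideanreal "Fn j"] cpt G True
        by (simp add: compact_space_def)
      then have "bounded (Fn j ` topspace X)" by (simp add: compact_imp_bounded)
      then show ?thesis by (auto simp: bounded_real)
    qed auto
  qed
  then obtain Mf where Mf: "\<And>j y. j < n \<Longrightarrow> y \<in> topspace X \<Longrightarrow> \<bar>Fn j y\<bar> \<le> Mf j" by metis
  define M where "M = (\<Sum>j<n. \<bar>Mf j\<bar>)"
  have bnd: "\<bar>Fn j y\<bar> \<le> M" if "j < n" "y \<in> topspace X" for j y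
  proof -
    have "\<bar>Mf j\<bar> \<le> M" unfolding M_def using that(1)
      by (intro member_le_sum) auto
    then show ?thesis using Mf[OF that] by linarith
  qed
  have hpsi: "\<bar>\<psi> j h\<bar> \<le> M" if "j < n" "h \<in> AutQ" for j h
    using bnd[OF that(1) act_in[OF act that(2) x0]] by (simp add: \<psi>_def)
  define K :: int where "K = \<lceil>M / \<epsilon>\<rceil> + 1"
  have flb: "0 \<le> \<lfloor>\<psi> j h / \<epsilon>\<rfloor> + K \<and> \<lfloor>\<psi> j h / \<epsilon>\<rfloor> + K < 2 * K"
    if "j < n" "h \<in> AutQ" for j h
  proof -
    define r where "r = \<psi> j h / \<epsilon>"
    have "\<bar>r\<bar> \<le> M / \<epsilon>" using hpsi[OF that] epos
      by (simp add: r_def abs_divide divide_right_mono)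
    then have r1: "- (M/\<epsilon>) \<le> r" "r \<le> M / \<epsilon>" by auto
    have "\<lfloor>- (M/\<epsilon>)\<rfloor> \<le> \<lfloor>r\<rfloor>" using r1 by (intro floor_mono)
    then have a1: "- \<lceil>M/\<epsilon>\<rceil> \<le> \<lfloor>r\<rfloor>" by (simp add: floor_minus)
    have "\<lfloor>r\<rfloor> \<le> \<lfloor>M/\<epsilon>\<rfloor>" using r1 by (intro floor_mono)
    moreover have "\<lfloor>M/\<epsilon>\<rfloor> \<le> \<lceil>M/\<epsilon>\<rceil>" by (rule floor_le_ceiling)
    ultimately show ?thesis using a1 unfolding K_def r_def by (smt (verit))
  qed
  define col where "col j S = (if \<exists>h\<in>AutQ. inv h ` F = S
      then nat (\<lfloor>\<psi> j (SOME h. h \<in> AutQ \<and> inv h ` F = S) / \<epsilon>\<rfloor> + K) else 0)" for j S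
  define s where "s = nat (2 * K) + 1"
  have colb: "\<forall>j<n. \<forall>S. col j S < s"
  proof (intro allI impI)
    fix j S assume j: "j < n"
    show "col j S < s"
    proof (cases "\<exists>h\<in>AutQ. inv h ` F = S")
      case True
      then have "(SOME h. h \<in> AutQ \<and> inv h ` F = S) \<in> AutQ" by (metis (mono_tags, lifting) someI_ex)
      from flb[OF j this] have "nat (\<lfloor>\<psi> j (SOME h. h \<in> AutQ \<and> inv h ` F = S) / \<epsilon>\<rfloor> + K) < nat (2 * K)"
        by (simp add: nat_less_eq_zless)
      then have "col j S < nat (2 * K)" by (simp only: col_def if_P[OF True])
      then show ?thesis by (simp add: s_def)
    next
      case False then show ?thesis by (simp add: col_def s_def)
    qed
  qed
  have close: "\<bar>\<psi> j h1 - \<psi> j h2\<bar> < \<epsilon>"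
    if j: "j < n" and h: "h1 \<in> AutQ" "h2 \<in> AutQ" "inv h1 ` F = inv h2 ` F" for j h1 h2
  proof -
    define k where "k = h1 \<circ> inv h2"
    have kA: "k \<in> AutQ" using h AutQ_comp AutQ_inv by (simp add: k_def)
    have s1: "\<And>q. h1 (inv h1 q) = q" using AutQ_bij[OF h(1)] by (simp add: bij_is_surj surj_f_inv_f)
    have "k ` F = h1 ` (inv h2 ` F)" by (simp add: k_def image_comp)
    also have "\<dots> = h1 ` (inv h1 ` F)" using h(3) by simp
    also have "\<dots> = F" using s1 by (simp add: image_comp image_ident)
    finally have kF: "k ` F = F" .
    have fixk: "\<forall>q\<in>F. k q = q" using AutQ_fix_finite[OF kA finF kF] .
    have i2: "\<And>q. inv h2 (h2 q) = q" using AutQ_bij[OF h(2)] by (simp add: bij_is_inj inv_f_f)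
    have "h1 = k \<circ> h2" by (rule ext) (simp add: k_def i2)
    then have "a h1 x0 = a k (a h2 x0)" using act_comp[OF act kA h(2) x0] by simp
    then show ?thesis using unif[OF j kA fixk act_in[OF act h(2) x0]] by (simp add: \<psi>_def)
  qed
  have samecol: "\<bar>\<psi> j h1 - \<psi> j h2\<bar> < 3 * \<epsilon>"
    if j: "j < n" and h: "h1 \<in> AutQ" "h2 \<in> AutQ" and c: "col j (inv h1 ` F) = col j (inv h2 ` F)" for j h1 h2
  proof -
    define h1' where "h1' = (SOME h. h \<in> AutQ \<and> inv h ` F = inv h1 ` F)"
    define h2' where "h2' = (SOME h. h \<in> AutQ \<and> inv h ` F = inv h2 ` F)"
    have h1': "h1' \<in> AutQ \<and> inv h1' ` F = inv h1 ` F" unfolding h1'_def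
      by (rule someI[of _ h1]) (simp add: h(1))
    have h2': "h2' \<in> AutQ \<and> inv h2' ` F = inv h2 ` F" unfolding h2'_def
      by (rule someI[of _ h2]) (simp add: h(2))
    have e1: "\<bar>\<psi> j h1 - \<psi> j h1'\<bar> < \<epsilon>" using close[OF j h(1)] h1' by auto
    have e2: "\<bar>\<psi> j h2 - \<psi> j h2'\<bar> < \<epsilon>" using close[OF j h(2)] h2' by auto
    have ex1: "\<exists>h\<in>AutQ. inv h ` F = inv h1 ` F" using h(1) by blast
    have ex2: "\<exists>h\<in>AutQ. inv h ` F = inv h2 ` F" using h(2) by blast
    have c1: "col j (inv h1 ` F) = nat (\<lfloor>\<psi> j h1' / \<epsilon>\<rfloor> + K)"
      by (simp only: col_def if_P[OF ex1] h1'_def)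
    have c2: "col j (inv h2 ` F) = nat (\<lfloor>\<psi> j h2' / \<epsilon>\<rfloor> + K)"
      by (simp only: col_def if_P[OF ex2] h2'_def)
    have "nat (\<lfloor>\<psi> j h1' / \<epsilon>\<rfloor> + K) = nat (\<lfloor>\<psi> j h2' / \<epsilon>\<rfloor> + K)"
      using c c1 c2 by simp
    then have fe: "\<lfloor>\<psi> j h1' / \<epsilon>\<rfloor> = \<lfloor>\<psi> j h2' / \<epsilon>\<rfloor>"
      using flb[OF j, of h1'] flb[OF j, of h2'] h1' h2' by (simp add: eq_nat_nat_iff)
    have "\<bar>\<psi> j h1' / \<epsilon> - \<psi> j h2' / \<epsilon>\<bar> < 1"
      using fe of_int_floor_le[of "\<psi> j h1' / \<epsilon>"] of_int_floor_le[of "\<psi> j h2' / \<epsilon>"]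
        real_of_int_floor_add_one_gt[of "\<psi> j h1' / \<epsilon>"] real_of_int_floor_add_one_gt[of "\<psi> j h2' / \<epsilon>"]
      by (smt (verit))
    then have "\<bar>\<psi> j h1' - \<psi> j h2'\<bar> / \<epsilon> < 1" using epos
      by (simp add: diff_divide_distrib[symmetric] abs_divide)
    then have "\<bar>\<psi> j h1' - \<psi> j h2'\<bar> < \<epsilon>" using epos by (simp add: divide_less_eq)
    then show ?thesis using e1 e2 by linarith
  qed
  obtain Y where Y: "infinite Y" "\<forall>j<n. \<forall>S1 S2. S1 \<subseteq> Y \<and> S2 \<subseteq> Y \<and> finite S1 \<and> finite S2
            \<and> card S1 = card F \<and> card S2 = card F \<longrightarrow> col j S1 = col j S2"
    using ramsey_multi[of "UNIV :: rat set" n col s "card F"] colb infinite_UNIV_char_0 by blast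
  define B where "B = F \<union> \<Union>((\<lambda>j. inv (G j) ` F) ` {..<n})"
  have "finite B" using finF by (simp add: B_def)
  then obtain u where u: "u \<in> AutQ" "u ` B \<subseteq> Y" using embed_infinite Y(1) by blast
  define h where "h = inv u"
  have hA: "h \<in> AutQ" using AutQ_inv[OF u(1)] by (simp add: h_def)
  have ih: "inv h = u" using AutQ_bij[OF u(1)] by (simp add: h_def inv_inv_eq)
  define x where "x = a h x0"
  have xX: "x \<in> topspace X" using act_in[OF act hA x0] by (simp add: x_def)
  have "\<bar>Fn j (a (G j) x) - Fn j x\<bar> \<le> E j" if j: "j < n" for j
  proof -
    define g where "g = G j"
    have gA: "g \<in> AutQ" using G j by (simp add: g_def)
    have ghA: "g \<circ> h \<in> AutQ" using AutQ_comp[OF gA hA] .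
    have invgh: "inv (g \<circ> h) = u \<circ> inv g"
      using o_inv_distrib[OF AutQ_bij[OF gA] AutQ_bij[OF hA]] ih by simp
    have injU: "inj u" using AutQ_bij[OF u(1)] bij_is_inj by blast
    have injg: "inj (inv g)" using AutQ_bij[OF AutQ_inv[OF gA]] bij_is_inj by blast
    have S1: "inv h ` F \<subseteq> Y" using u(2) ih by (auto simp: B_def)
    have S2: "inv (g \<circ> h) ` F \<subseteq> Y" using u(2) invgh j
      by (auto simp: B_def g_def image_comp[symmetric])
    have c1: "card (inv h ` F) = card F" using ih injU by (simp add: card_image inj_on_subset)
    have "inj (u \<circ> inv g)" using injU injg by (rule inj_compose)
    then have c2: "card (inv (g \<circ> h) ` F) = card F" using invgh
      by (metis card_image inj_on_subset subset_UNIV)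
    have "col j (inv h ` F) = col j (inv (g \<circ> h) ` F)"
      using Y(2) j S1 S2 c1 c2 finF by blast
    from samecol[OF j hA ghA this] have "\<bar>\<psi> j h - \<psi> j (g \<circ> h)\<bar> < 3 * \<epsilon>" .
    moreover have "\<psi> j (g \<circ> h) = Fn j (a g x)"
      using act_comp[OF act gA hA x0] by (simp add: \<psi>_def x_def)
    moreover have "\<psi> j h = Fn j x" by (simp add: \<psi>_def x_def)
    ultimately show ?thesis using ele[OF j] by (simp add: g_def abs_minus_commute)
  qed
  then show ?thesis using xX by blast
qed

end


lemma EA: "extremely_amenable_on TYPE('b) AutQ"
  unfolding extremely_amenable_on_def
proof (intro allI impI)
  fix X :: "'b topology" and a
  assume H: "compact_space X \<and> Hausdorff_space X \<and> topspace X \<noteq> {} \<and> continuous_action AutQ X a"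
  then have cpt: "compact_space X" and hd: "Hausdorff_space X" and ne: "topspace X \<noteq> {}"
    and act: "continuous_action AutQ X a" by auto
  define C where "C g f e = {x\<in>topspace X. \<bar>f (a g x) - f x\<bar> \<le> e}" for g f and e :: real
  define \<U> where "\<U> = {C g f e | g f e. g \<in> AutQ \<and> continuous_map X euclideanreal f \<and> e > 0}"
  have closed: "\<forall>U\<in>\<U>. closedin X U"
  proof
    fix U assume "U \<in> \<U>"
    then obtain g f e where U: "U = C g f e" "g \<in> AutQ" "continuous_map X euclideanreal f"
      by (auto simp: \<U>_def)
    have cg: "continuous_map X X (a g)" using act_g_cont[OF act U(2)] .
    have "continuous_map X euclideanreal (\<lambda>x. \<bar>f (a g x) - f x\<bar>)"
      using continuous_map_compose[OF cg U(3)] U(3)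
      by (intro continuous_intros) (auto simp: o_def)
    from closedin_continuous_map_preimage[OF this, of "{..e}"]
    show "closedin X U" by (simp add: U(1) C_def)
  qed
  have fip: "topspace X \<inter> \<Inter>\<F> \<noteq> {}" if "finite \<F>" "\<F> \<subseteq> \<U>" for \<F>
  proof -
    obtain n \<phi> where nphi: "\<F> = \<phi> ` {i. i < (n::nat)}"
      using \<open>finite \<F>\<close> unfolding finite_conv_nat_seg_image by blast
    have "\<forall>i\<in>{i. i<n}. \<exists>p. \<phi> i = C (fst p) (fst (snd p)) (snd (snd p)) \<and> fst p \<in> AutQ \<and>
          continuous_map X euclideanreal (fst (snd p)) \<and> snd (snd p) > 0"
    proof
      fix i assume "i \<in> {i. i<n}"
      then have "\<phi> i \<in> \<U>" using that(2) nphi by blast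
      then obtain g f e where gfe: "\<phi> i = C g f e" "g \<in> AutQ" "continuous_map X euclideanreal f" "e > 0"
        unfolding \<U>_def by blast
      then show "\<exists>p. \<phi> i = C (fst p) (fst (snd p)) (snd (snd p)) \<and> fst p \<in> AutQ \<and>
          continuous_map X euclideanreal (fst (snd p)) \<and> snd (snd p) > 0"
        by (intro exI[of _ "(g,f,e)"]) simp
    qed
    then obtain P where P: "\<forall>i\<in>{i. i<n}. \<phi> i = C (fst (P i)) (fst (snd (P i))) (snd (snd (P i))) \<and> fst (P i) \<in> AutQ \<and>
          continuous_map X euclideanreal (fst (snd (P i))) \<and> snd (snd (P i)) > 0"
      by (rule bchoice[elim_format]) blast
    obtain x where x: "x \<in> topspace X"
      "\<forall>j<n. \<bar>fst (snd (P j)) (a (fst (P j)) x) - fst (snd (P j)) x\<bar> \<le> snd (snd (P j))"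
      using approx[OF act cpt ne, of n "\<lambda>j. fst (P j)" "\<lambda>j. fst (snd (P j))" "\<lambda>j. snd (snd (P j))"] P
      by auto
    have "x \<in> \<Inter>\<F>" using x P by (auto simp: nphi C_def)
    then show ?thesis using x by blast
  qed
  have "topspace X \<inter> \<Inter>\<U> \<noteq> {}"
    using cpt closed fip unfolding compact_space_def compactin_fip by blast
  then obtain x where x: "x \<in> topspace X" "x \<in> \<Inter>\<U>" by blast
  have "a g x = x" if g: "g \<in> AutQ" for g
  proof (rule ccontr)
    assume neq: "a g x \<noteq> x"
    have gx: "a g x \<in> topspace X" using act_in[OF act g x(1)] .
    have t1: "t1_space X" using hd by (rule Hausdorff_imp_t1_space)
    have c1: "closedin X {a g x}" "closedin X {x}"
      using t1 gx x(1) by (auto simp: t1_space_closedin_singleton)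
    have nrm: "normal_space X" using cpt hd compact_Hausdorff_or_regular_imp_normal_space by blast
    obtain f where f: "continuous_map X euclideanreal f" "f ` {a g x} \<subseteq> {1}" "f ` {x} \<subseteq> {0}"
      using Urysohn_lemma_alt[OF nrm c1, of 1 0] neq by auto
    have "C g f (1/2) \<in> \<U>" unfolding \<U>_def using g f(1)
      by (intro CollectI exI[of _ g] exI[of _ f] exI[of _ "1/2::real"]) simp
    then have "x \<in> C g f (1/2)" using x(2) by blast
    then show False using f(2,3) by (simp add: C_def)
  qed
  then show "\<exists>x\<in>topspace X. \<forall>g\<in>AutQ. a g x = x" using x(1) by blast
qed



definition Prod :: "(rat \<times> rat \<Rightarrow> bool) topology" where
  "Prod = product_topology (\<lambda>_. discrete_topology (UNIV :: bool set)) UNIV"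

definition LO :: "(rat \<times> rat \<Rightarrow> bool) set" where
  "LO = {R. (\<forall>p. \<not> R (p,p)) \<and> (\<forall>p q r. R (p,q) \<and> R (q,r) \<longrightarrow> R (p,r)) \<and> (\<forall>p q. p \<noteq> q \<longrightarrow> R (p,q) \<or> R (q,p))}"

definition code :: "rat \<Rightarrow> rat \<Rightarrow> (rat \<Rightarrow> rat)" where
  "code p q = (\<lambda>x. if x = 0 then p else q)"

definition enc :: "(rat \<times> rat \<Rightarrow> bool) \<Rightarrow> universe" where
  "enc R = {{code p q} | p q. R (p,q)}"

definition dec :: "universe \<Rightarrow> (rat \<times> rat \<Rightarrow> bool)" where
  "dec U = (\<lambda>(p,q). {code p q} \<in> U)"

lemma code_inj: "code p q = code p' q' \<longleftrightarrow> p = p' \<and> q = q'"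
proof
  assume e: "code p q = code p' q'"
  have "code p q 0 = code p' q' 0" "code p q 1 = code p' q' 1" using e by simp_all
  then show "p = p' \<and> q = q'" by (simp add: code_def)
qed simp

lemma dec_enc[simp]: "dec (enc R) = R"
  by (rule ext) (auto simp: dec_def enc_def code_inj)

lemma topspace_Prod[simp]: "topspace Prod = UNIV"
  by (simp add: Prod_def)

lemma fin_det_open:
  "openin Prod {R. \<Phi> (R x) (R y) (R z)}"
  unfolding Prod_def openin_product_topology_alt
proof (intro ballI)
  fix R0 assume R0: "R0 \<in> {R. \<Phi> (R x) (R y) (R z)}"
  define U where "U i = (if i \<in> {x,y,z} then {R0 i} else UNIV)" for i
  have "finite {i \<in> UNIV. U i \<noteq> topspace (discrete_topology (UNIV::bool set))}"
    by (rule finite_subset[of _ "{x,y,z}"]) (auto simp: U_def)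
  moreover have "R0 \<in> Pi\<^sub>E UNIV U" by (auto simp: U_def)
  moreover have "Pi\<^sub>E UNIV U \<subseteq> {R. \<Phi> (R x) (R y) (R z)}"
  proof
    fix R assume "R \<in> Pi\<^sub>E UNIV U"
    then have "\<forall>i. R i \<in> U i" by (auto simp: PiE_def Pi_def)
    then have "R x \<in> U x" "R y \<in> U y" "R z \<in> U z" by blast+
    then have "R x = R0 x" "R y = R0 y" "R z = R0 z" by (auto simp: U_def)
    then show "R \<in> {R. \<Phi> (R x) (R y) (R z)}" using R0 by simp
  qed
  ultimately show "\<exists>U. finite {i \<in> UNIV. U i \<noteq> topspace (discrete_topology UNIV)} \<and>
             (\<forall>i\<in>UNIV. openin (discrete_topology UNIV) (U i)) \<and> R0 \<in> Pi\<^sub>E UNIV U \<and> Pi\<^sub>E UNIV U \<subseteq> {R. \<Phi> (R x) (R y) (R z)}"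
    by auto
qed

lemma fin_det_closed:
  "closedin Prod {R. \<Phi> (R x) (R y) (R z)}"
proof -
  have "topspace Prod - {R. \<Phi> (R x) (R y) (R z)} = {R. \<not> \<Phi> (R x) (R y) (R z)}" by auto
  then show ?thesis using fin_det_open[of "\<lambda>a b c. \<not> \<Phi> a b c" x y z]
    by (simp add: closedin_def)
qed

lemma LO_closed: "closedin Prod LO"
proof -
  have eqLO: "LO = (\<Inter>p. {R. \<not> R (p,p)}) \<inter> (\<Inter>t. {R. R (fst t, fst (snd t)) \<and> R (fst (snd t), snd (snd t)) \<longrightarrow> R (fst t, snd (snd t))})
     \<inter> (\<Inter>t. {R. fst t \<noteq> snd t \<longrightarrow> R (fst t, snd t) \<or> R (snd t, fst t)})"
    unfolding LO_def by (rule set_eqI) auto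
  have c1: "closedin Prod (\<Inter>p. {R. \<not> R (p,p)})"
    using fin_det_closed[of "\<lambda>a b c. \<not> a"] by (intro closedin_INT) auto
  have c2: "closedin Prod (\<Inter>t. {R. R (fst t, fst (snd t)) \<and> R (fst (snd t), snd (snd t)) \<longrightarrow> R (fst t, snd (snd t))})"
    using fin_det_closed[of "\<lambda>a b c. a \<and> b \<longrightarrow> c"] by (intro closedin_INT) auto
  have c3: "closedin Prod (\<Inter>t. {R. fst t \<noteq> snd t \<longrightarrow> R (fst t, snd t) \<or> R (snd t, fst t)})"
  proof (intro closedin_INT)
    fix t :: "rat \<times> rat"
    show "closedin Prod {R. fst t \<noteq> snd t \<longrightarrow> R (fst t, snd t) \<or> R (snd t, fst t)}"
      using fin_det_closed[of "\<lambda>a b c. fst t \<noteq> snd t \<longrightarrow> a \<or> b" "(fst t, snd t)" "(snd t, fst t)" "(fst t, snd t)"]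
      by simp
  qed auto
  show ?thesis unfolding eqLO by (intro closedin_Int c1 c2 c3)
qed

lemma Prod_compact: "compact_space Prod"
  unfolding Prod_def by (simp add: compact_space_product_topology compact_space_discrete_topology)

lemma Prod_Hausdorff: "Hausdorff_space Prod"
  unfolding Prod_def by (simp add: Hausdorff_space_product_topology)

definition AA :: "universe set" where "AA = enc ` LO"

definition XX :: "universe topology" where "XX = pullback_topology AA dec Prod"

lemma topspace_XX: "topspace XX = AA"
  by (simp add: XX_def topspace_pullback_topology)

lemma dec_cont: "continuous_map XX Prod dec"
  using continuous_map_pullback[OF continuous_map_id, of AA dec Prod] by (simp add: XX_def o_def)

lemma XX_compact: "compact_space XX"
proof -
  have "continuous_map (subtopology Prod LO) XX enc"
    unfolding XX_def
  proof (rule continuous_map_pullback')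
    show "continuous_map (subtopology Prod LO) Prod (dec \<circ> enc)"
      by (simp add: o_def continuous_map_from_subtopology)
    show "topspace (subtopology Prod LO) \<subseteq> enc -` AA" by (auto simp: AA_def)
  qed
  moreover have "compactin (subtopology Prod LO) LO"
    using closedin_compact_space[OF Prod_compact LO_closed] by (simp add: compactin_subtopology)
  ultimately have "compactin XX (enc ` LO)" by (rule image_compactin[rotated])
  then show ?thesis by (simp add: compact_space_def topspace_XX AA_def)
qed

lemma XX_Hausdorff: "Hausdorff_space XX"
  unfolding Hausdorff_space_def
proof (intro allI impI)
  fix x y assume xyA: "x \<in> topspace XX \<and> y \<in> topspace XX \<and> x \<noteq> y"
  then have x: "x \<in> topspace XX" and y: "y \<in> topspace XX" and xy: "x \<noteq> y" by auto
  from x y xy have "dec x \<noteq> dec y" by (auto simp: topspace_XX AA_def)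
  then have "\<exists>U V. openin Prod U \<and> openin Prod V \<and> dec x \<in> U \<and> dec y \<in> V \<and> disjnt U V"
    using Prod_Hausdorff unfolding Hausdorff_space_def by simp
  then obtain U V where UV: "openin Prod U" "openin Prod V" "dec x \<in> U" "dec y \<in> V" "disjnt U V"
    by blast
  have o1: "openin XX (dec -` U \<inter> AA)" using UV(1) unfolding XX_def openin_pullback_topology by blast
  have o2: "openin XX (dec -` V \<inter> AA)" using UV(2) unfolding XX_def openin_pullback_topology by blast
  have m1: "x \<in> dec -` U \<inter> AA" using x UV(3) by (simp add: topspace_XX)
  have m2: "y \<in> dec -` V \<inter> AA" using y UV(4) by (simp add: topspace_XX)
  have d: "disjnt (dec -` U \<inter> AA) (dec -` V \<inter> AA)" using UV(5) by (auto simp: disjnt_def)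
  show "\<exists>U V. openin XX U \<and> openin XX V \<and> x \<in> U \<and> y \<in> V \<and> disjnt U V"
    using o1 o2 m1 m2 d by blast
qed



definition act :: "(rat \<Rightarrow> rat) \<Rightarrow> (rat \<times> rat \<Rightarrow> bool) \<Rightarrow> (rat \<times> rat \<Rightarrow> bool)" where
  "act g R = (\<lambda>(p,q). R (inv g p, inv g q))"

definition aa :: "(rat \<Rightarrow> rat) \<Rightarrow> universe \<Rightarrow> universe" where
  "aa g U = enc (act g (dec U))"

lemma act_LO: assumes g: "bij g" and R: "R \<in> LO" shows "act g R \<in> LO"
proof -
  have ig: "inj (inv g)" using bij_is_inj[OF bij_imp_bij_inv[OF g]] .
  have "inv g p \<noteq> inv g q" if "p \<noteq> q" for p q using that by (simp add: inj_eq[OF ig])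
  note ne = this
  have irr: "\<And>p. \<not> R (p,p)" and tr: "\<And>p q r. R (p,q) \<Longrightarrow> R (q,r) \<Longrightarrow> R (p,r)"
    and tot: "\<And>p q. p \<noteq> q \<Longrightarrow> R (p,q) \<or> R (q,p)" using R unfolding LO_def by blast+
  show ?thesis unfolding LO_def act_def
  proof (intro CollectI conjI allI impI)
    fix p show "\<not> (case (p, p) of (p, q) \<Rightarrow> R (inv g p, inv g q))" using irr by simp
  next
    fix p q r assume "(case (p, q) of (p, q) \<Rightarrow> R (inv g p, inv g q)) \<and> (case (q, r) of (p, q) \<Rightarrow> R (inv g p, inv g q))"
    then show "case (p, r) of (p, q) \<Rightarrow> R (inv g p, inv g q)" using tr by auto
  next
    fix p q :: rat assume "p \<noteq> q"
    then show "(case (p, q) of (p, q) \<Rightarrow> R (inv g p, inv g q)) \<or> (case (q, p) of (p, q) \<Rightarrow> R (inv g p, inv g q))"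
      using tot ne by simp
  qed
qed

lemma act_id': "act id R = R" by (simp add: act_def)

lemma act_comp': "bij g \<Longrightarrow> bij h \<Longrightarrow> act (g \<circ> h) R = act g (act h R)"
  by (simp add: act_def o_inv_distrib)

lemma LO_less: "(\<lambda>(p,q). p < (q::rat)) \<in> LO" by (auto simp: LO_def)

lemma act_cont_XX:
  assumes H: "H \<subseteq> Sinf"
  shows "continuous_map (prod_topology (subtopology Sinf_top H) XX) XX (\<lambda>(g, x). aa g x)"
proof -
  define P where "P = prod_topology (subtopology Sinf_top H) XX"
  have tP: "topspace P = H \<times> AA" using H by (simp add: P_def topspace_Sinf_top topspace_XX Int_absorb1)
  have bijH: "bij g" if "g \<in> H" for g using H that by (auto simp: Sinf_def)
  have comp: "continuous_map P (discrete_topology UNIV) (\<lambda>z. dec (snd z) (inv (fst z) p, inv (fst z) q))" for p q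
    unfolding continuous_map_def
  proof (intro conjI allI impI)
    show "(\<lambda>z. dec (snd z) (inv (fst z) p, inv (fst z) q)) \<in> topspace P \<rightarrow> topspace (discrete_topology UNIV)"
      by (simp only: topspace_discrete_topology) (simp add: Pi_def)
    fix U :: "bool set" assume "openin (discrete_topology UNIV) U"
    show "openin P {z \<in> topspace P. dec (snd z) (inv (fst z) p, inv (fst z) q) \<in> U}"
    proof (rule openin_subopen[THEN iffD2], intro ballI)
      fix z0 assume z0: "z0 \<in> {z \<in> topspace P. dec (snd z) (inv (fst z) p, inv (fst z) q) \<in> U}"
      obtain g0 x0 where gx: "z0 = (g0, x0)" by fastforce
      have g0H: "g0 \<in> H" and x0A: "x0 \<in> AA" using z0 gx tP by auto
      define r0 where "r0 = inv g0 p"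
      define s0 where "s0 = inv g0 q"
      define N1 where "N1 = {g\<in>H. g r0 = p} \<inter> {g\<in>H. g s0 = q}"
      define N2 where "N2 = {x \<in> topspace XX. (\<lambda>x. dec x (r0, s0)) x \<in> {dec x0 (r0,s0)}}"
      have o1: "openin (subtopology Sinf_top H) N1" unfolding N1_def
        by (intro openin_Int open_basic[OF H])
      have pj: "continuous_map Prod (discrete_topology UNIV) (\<lambda>R. R (r0, s0))"
        unfolding Prod_def by (rule continuous_map_product_projection) simp
      have "continuous_map XX (discrete_topology UNIV) (\<lambda>x. dec x (r0, s0))"
        using continuous_map_compose[OF dec_cont pj] by (simp add: o_def)
      then have o2: "openin XX N2" unfolding N2_def
        by (rule openin_continuous_map_preimage) simp
      have oN: "openin P (N1 \<times> N2)" unfolding P_def using o1 o2 by (simp add: openin_prod_Times_iff)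
      have sg0: "g0 (inv g0 y) = y" for y using bijH[OF g0H] by (simp add: bij_is_surj surj_f_inv_f)
      have "z0 \<in> N1 \<times> N2" using gx g0H x0A sg0 by (simp add: N1_def N2_def r0_def s0_def topspace_XX)
      moreover have "N1 \<times> N2 \<subseteq> {z \<in> topspace P. dec (snd z) (inv (fst z) p, inv (fst z) q) \<in> U}"
      proof
        fix z assume z: "z \<in> N1 \<times> N2"
        obtain g x where zz: "z = (g, x)" by fastforce
        have gH: "g \<in> H" "g r0 = p" "g s0 = q" and xN: "x \<in> topspace XX" "dec x (r0,s0) = dec x0 (r0,s0)"
          using z zz by (auto simp: N1_def N2_def)
        have "inv g p = r0" "inv g q = s0"
          using inv_f_eq[OF bij_is_inj[OF bijH[OF gH(1)]] gH(2)] inv_f_eq[OF bij_is_inj[OF bijH[OF gH(1)]] gH(3)] by auto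
        moreover have "dec x0 (r0, s0) \<in> U" using z0 gx by (simp add: r0_def s0_def)
        ultimately show "z \<in> {z \<in> topspace P. dec (snd z) (inv (fst z) p, inv (fst z) q) \<in> U}"
          using zz gH xN tP by (simp add: topspace_XX)
      qed
      ultimately show "\<exists>T. openin P T \<and> z0 \<in> T \<and> T \<subseteq> {z \<in> topspace P. dec (snd z) (inv (fst z) p, inv (fst z) q) \<in> U}"
        using oN by blast
    qed
  qed
  have cP: "continuous_map P Prod (\<lambda>z. act (fst z) (dec (snd z)))"
    unfolding Prod_def continuous_map_componentwise_UNIV
  proof
    fix k :: "rat \<times> rat"
    obtain p q where k: "k = (p, q)" by fastforce
    show "continuous_map P (discrete_topology UNIV) (\<lambda>z. act (fst z) (dec (snd z)) k)"
      using comp[of p q] by (simp add: k act_def)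
  qed
  have "continuous_map P XX (\<lambda>(g, x). aa g x)"
    unfolding XX_def
  proof (rule continuous_map_pullback')
    show "continuous_map P Prod (dec \<circ> (\<lambda>(g, x). aa g x))"
      by (rule continuous_map_eq[OF cP]) (simp add: aa_def split_def)
    show "topspace P \<subseteq> (\<lambda>(g, x). aa g x) -` AA"
      using tP bijH act_LO by (auto simp: aa_def AA_def)
  qed
  then show ?thesis by (simp add: P_def)
qed



lemma maximal:
  assumes sg: "subgroup_Sinf H'" and sub: "AutQ \<subseteq> H'" and ea: "extremely_amenable_on TYPE(universe) H'"
  shows "H' = AutQ"
proof -
  have HS: "H' \<subseteq> Sinf" and Hinv: "\<forall>f\<in>H'. inv f \<in> H'" using sg by (auto simp: subgroup_Sinf_def)
  have bijH: "bij g" if "g \<in> H'" for g using HS that by (auto simp: Sinf_def)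
  have ca: "continuous_action H' XX aa"
    unfolding continuous_action_def
  proof (intro conjI ballI)
    fix g x assume g: "g \<in> H'" and x: "x \<in> topspace XX"
    then obtain R where R: "R \<in> LO" "x = enc R" by (auto simp: topspace_XX AA_def)
    show "aa g x \<in> topspace XX" using act_LO[OF bijH[OF g] R(1)] R(2)
      by (simp add: aa_def topspace_XX AA_def)
  next
    fix x assume x: "x \<in> topspace XX"
    then obtain R where R: "R \<in> LO" "x = enc R" by (auto simp: topspace_XX AA_def)
    show "aa id x = x" using R(2) by (simp add: aa_def act_id')
  next
    fix g h x assume g: "g \<in> H'" and h: "h \<in> H'" and x: "x \<in> topspace XX"
    show "aa (g \<circ> h) x = aa g (aa h x)"
      by (simp add: aa_def act_comp'[OF bijH[OF g] bijH[OF h]])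
  next
    show "continuous_map (prod_topology (subtopology Sinf_top H') XX) XX (\<lambda>(g, x). aa g x)"
      by (rule act_cont_XX[OF HS])
  qed
  have ne: "topspace XX \<noteq> {}" using LO_less by (auto simp: topspace_XX AA_def)
  obtain x where x: "x \<in> topspace XX" "\<forall>g\<in>H'. aa g x = x"
    using ea ca ne XX_compact XX_Hausdorff unfolding extremely_amenable_on_def by blast
  obtain R where R: "R \<in> LO" "x = enc R" using x(1) by (auto simp: topspace_XX AA_def)
  have irr: "\<And>p. \<not> R (p,p)" and tr: "\<And>p q r. R (p,q) \<Longrightarrow> R (q,r) \<Longrightarrow> R (p,r)"
    and tot: "\<And>p q. p \<noteq> q \<Longrightarrow> R (p,q) \<or> R (q,p)" using R(1) unfolding LO_def by blast+
  have fixR: "act g R = R" if "g \<in> H'" for g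
  proof -
    have "enc (act g R) = enc R" using x(2) that R(2) by (simp add: aa_def)
    then have "dec (enc (act g R)) = dec (enc R)" by simp
    then show ?thesis by simp
  qed
  have invR: "R (g p, g q) = R (p, q)" if g: "g \<in> H'" for g p q
  proof -
    have "act (inv g) R (p, q) = R (p, q)" using fixR[OF Hinv[rule_format, OF g]] by simp
    then show ?thesis using inv_inv_eq[OF bijH[OF g]] by (simp add: act_def)
  qed
  have transfer: "R (p, q) = R (p', q')" if "p < q" "p' < q'" for p q p' q'
  proof -
    have "card {p, q} = card {p', q'}" using that by simp
    then obtain u where u: "u \<in> AutQ" "u ` {p, q} = {p', q'}"
      using hom_lemma[of "{p,q}" "{p',q'}"] by blast
    have lt: "u p < u q" using AutQ_less_iff[OF u(1)] that(1) by simp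
    have "u p \<in> {p', q'}" "u q \<in> {p', q'}" using u(2) by auto
    then have "u p = p' \<and> u q = q'" using lt that(2) by auto
    then show ?thesis using invR[of u p q] u(1) sub by auto
  qed
  have "h \<in> AutQ" if h: "h \<in> H'" for h
  proof (cases "R (0, 1)")
    case True
    have pos: "R (p, q)" if "p < q" for p q using transfer[of 0 1 p q] that True by simp
    have mono: "h p < h q" if "p < q" for p q
    proof -
      have "R (h p, h q)" using invR[OF h] pos[OF that] by simp
      show ?thesis
      proof (rule ccontr)
        assume "\<not> h p < h q"
        then have "h q < h p \<or> h q = h p" by auto
        then show False
        proof
          assume "h q < h p" then have "R (h q, h p)" by (rule pos)
          then show False using tr[OF \<open>R (h p, h q)\<close>] irr by blast
        next
          assume "h q = h p" then show False using \<open>R (h p, h q)\<close> irr by simp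
        qed
      qed
    qed
    then show ?thesis using bijH[OF h] by (simp add: AutQ_def)
  next
    case False
    have negR: "\<not> R (p, q)" if "p < q" for p q using transfer[of 0 1 p q] that False by simp
    have mono: "h p < h q" if "p < q" for p q
    proof -
      have "R (q, p)" using tot[of q p] negR[OF that] that by auto
      then have Rh: "R (h q, h p)" using invR[OF h] by simp
      show ?thesis
      proof (rule ccontr)
        assume "\<not> h p < h q"
        then have "h q < h p \<or> h q = h p" by auto
        then show False
        proof
          assume "h q < h p" then show False using negR Rh by blast
        next
          assume "h q = h p" then show False using Rh irr by simp
        qed
      qed
    qed
    then show ?thesis using bijH[OF h] by (simp add: AutQ_def)
  qed
  then show ?thesis using sub by blast
qed

theorem mainTheorem11:
  shows "subgroup_Sinf AutQ \<and>
         extremely_amenable_on TYPE('b) AutQ \<and>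
         (\<forall>H'. subgroup_Sinf H' \<and> AutQ \<subseteq> H' \<and> extremely_amenable_on TYPE(universe) H'
                \<longrightarrow> H' = AutQ)"
  using AutQ_subgroup EA maximal by blast


end
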